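(* Let $E$ be an integer such that all quantities below are normal double-precision numbers. Let $x$ and $M$ be positive double-precision numbers with $x \in [2^{E}, 2^{E+1})$, $M \ge 2$, and suppose $y = x \otimes M \in [2^{E+1}, 2^{E+2})$. Then $(x \otimes M) \oslash M = x$. *)

theory Defs
  imports Complex_Main
begin

text \<open>IEEE 754 binary64 (double precision) finite values, modelled as reals:
  r = m * 2^e with integer significand |m| < 2^53 and exponent -1074 <= e <= 971
  (this covers subnormals, normals, and zero; largest value (2^53-1)*2^971).\<close>

definition is_double :: "real \<Rightarrow> bool" where
  "is_double r \<longleftrightarrow> (\<exists>m::int. \<exists>e::int.
      r = real_of_int m * 2 powr real_of_int e \<and> \<bar>m\<bar> < 2^53 \<and> -1074 \<le> e \<and> e \<le> 971)"

definition even_double :: "real \<Rightarrow> bool" where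
  "even_double r \<longleftrightarrow> (\<exists>m::int. \<exists>e::int.
      r = real_of_int m * 2 powr real_of_int e \<and> even m \<and> \<bar>m\<bar> < 2^53 \<and> -1074 \<le> e \<and> e \<le> 971)"

text \<open>Round to nearest, ties to even (IEEE default rounding), for results in the finite range.\<close>
definition rnd :: "real \<Rightarrow> real" where
  "rnd r = (THE f. is_double f \<and> (\<forall>g. is_double g \<longrightarrow> \<bar>f - r\<bar> \<le> \<bar>g - r\<bar>) \<and>
       ((\<exists>g. is_double g \<and> g \<noteq> f \<and> \<bar>g - r\<bar> = \<bar>f - r\<bar>) \<longrightarrow> even_double f))"

definition fmul :: "real \<Rightarrow> real \<Rightarrow> real" where
  "fmul x y = rnd (x * y)"

definition fdiv :: "real \<Rightarrow> real \<Rightarrow> real" where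
  "fdiv x y = rnd (x / y)"

end

theory Submission
  imports Defs
begin
lemma pow2_split: "d \<ge> 0 \<Longrightarrow> (2::real) powr real_of_int (k + d) = 2 powr real_of_int k * 2 ^ nat d"
proof -
  assume "d \<ge> 0"
  hence "(2::real) powr real_of_int d = 2 ^ nat d" by (metis of_nat_nat powr_realpow zero_less_numeral)
  thus ?thesis by (simp add: powr_add)
qed

lemma pow2_split': "k \<le> e \<Longrightarrow> (2::real) powr real_of_int e = 2 powr real_of_int k * 2 ^ nat (e - k)"
  using pow2_split[of "e-k" k] by simp

lemma grid:
  assumes "is_double g" "2 powr real_of_int k \<le> \<bar>g\<bar>"
  shows "\<exists>b::int. g = real_of_int b * 2 powr real_of_int (k-52)"
proof -
  obtain m e where g: "g = real_of_int m * 2 powr real_of_int e" "\<bar>m\<bar> < 2^53"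
    using assms(1) unfolding is_double_def by blast
  have "\<bar>g\<bar> = real_of_int \<bar>m\<bar> * 2 powr real_of_int e" using g by (simp add: abs_mult)
  also have "\<dots> < 2^53 * 2 powr real_of_int e"
  proof -
    have "real_of_int \<bar>m\<bar> < 2^53" using g(2) by (metis of_int_less_iff of_int_numeral of_int_power)
    thus ?thesis by (intro mult_strict_right_mono) auto
  qed
  also have "\<dots> = 2 powr real_of_int (e + 53)" using pow2_split[of 53 e] by simp
  finally have "2 powr real_of_int k < 2 powr real_of_int (e + 53)" using assms(2) by linarith
  hence "k < e + 53" by (simp add: powr_less_cancel_iff) 
  hence "2 powr real_of_int e = 2 powr real_of_int (k-52) * 2 ^ nat (e - (k-52))"
    by (intro pow2_split') simp
  hence "g = real_of_int (m * 2 ^ nat (e - (k-52))) * 2 powr real_of_int (k-52)"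
    using g by simp
  thus ?thesis by blast
qed

lemma double_of:
  assumes "\<bar>n\<bar> < 2^53" "-1074 \<le> j" "j \<le> 971"
  shows "is_double (real_of_int n * 2 powr real_of_int j)"
  using assms unfolding is_double_def by blast

lemma double_of':
  assumes "\<bar>n\<bar> \<le> 2^53" "-1074 \<le> j" "j \<le> 970"
  shows "is_double (real_of_int n * 2 powr real_of_int j)"
proof (cases "\<bar>n\<bar> < 2^53")
  case True thus ?thesis using assms double_of by simp
next
  case False
  hence "\<bar>n\<bar> = 2^53" using assms by simp
  hence "even \<bar>n\<bar>" by simp
  hence "even n" by simp
  then obtain s where s0: "n = 2 * s" by (rule evenE)
  have s: "n = 2 * s" "\<bar>s\<bar> = 2^52" using s0 \<open>\<bar>n\<bar> = 2^53\<close> by (auto simp: abs_mult)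
  have eq: "real_of_int n * 2 powr real_of_int j = real_of_int s * 2 powr real_of_int (j+1)"
    using s pow2_split[of 1 j] by simp
  have d: "is_double (real_of_int s * 2 powr real_of_int (j+1))"
    by (rule double_of) (use s assms in auto)
  show ?thesis unfolding eq by (rule d)
qed

lemma double_bound:
  assumes "is_double g" shows "\<bar>g\<bar> \<le> (2^53-1) * 2 powr 971"
proof -
  obtain m e where g: "g = real_of_int m * 2 powr real_of_int e" "\<bar>m\<bar> < 2^53" "e \<le> 971"
    using assms unfolding is_double_def by blast
  have "\<bar>m\<bar> \<le> 2^53 - 1" using g by simp
  hence "real_of_int \<bar>m\<bar> \<le> real_of_int (2^53 - 1)" by (simp only: of_int_le_iff)
  hence m: "real_of_int \<bar>m\<bar> \<le> 2^53 - 1" by simp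
  have p: "2 powr real_of_int e \<le> 2 powr (971::real)" using g(3) by (subst powr_le_cancel_iff) auto
  have "\<bar>g\<bar> = real_of_int \<bar>m\<bar> * 2 powr real_of_int e" using g by (simp add: abs_mult)
  also have "\<dots> \<le> (2^53-1) * 2 powr 971"
    by (rule mult_mono[OF m p]) auto
  finally show ?thesis .
qed

lemma cancel2: "real_of_int a * 2 powr x = real_of_int b * 2 powr x \<Longrightarrow> a = b"
  by simp

lemma rnd_eqI:
  assumes f: "is_double f"
    and mn: "\<forall>g. is_double g \<longrightarrow> \<bar>f - r\<bar> \<le> \<bar>g - r\<bar>"
    and t1: "(\<exists>g. is_double g \<and> g \<noteq> f \<and> \<bar>g - r\<bar> = \<bar>f - r\<bar>) \<longrightarrow> even_double f"
    and t2: "\<forall>g. is_double g \<and> g \<noteq> f \<and> \<bar>g - r\<bar> = \<bar>f - r\<bar> \<longrightarrow> \<not> even_double g"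
  shows "rnd r = f"
  unfolding rnd_def
proof (rule the_equality)
  show "is_double f \<and> (\<forall>g. is_double g \<longrightarrow> \<bar>f - r\<bar> \<le> \<bar>g - r\<bar>) \<and>
       ((\<exists>g. is_double g \<and> g \<noteq> f \<and> \<bar>g - r\<bar> = \<bar>f - r\<bar>) \<longrightarrow> even_double f)"
    using f mn t1 by blast
next
  fix f' assume h: "is_double f' \<and> (\<forall>g. is_double g \<longrightarrow> \<bar>f' - r\<bar> \<le> \<bar>g - r\<bar>) \<and>
       ((\<exists>g. is_double g \<and> g \<noteq> f' \<and> \<bar>g - r\<bar> = \<bar>f' - r\<bar>) \<longrightarrow> even_double f')"
  show "f' = f"
  proof (rule ccontr)
    assume ne: "f' \<noteq> f"
    have eq: "\<bar>f' - r\<bar> = \<bar>f - r\<bar>" using h mn f by (meson order_antisym)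
    hence "even_double f'" using h f ne by metis
    thus False using t2 h ne eq by blast
  qed
qed

lemma rnd_unique:
  assumes "is_double f" "\<forall>g. is_double g \<and> g \<noteq> f \<longrightarrow> \<bar>f - r\<bar> < \<bar>g - r\<bar>"
  shows "rnd r = f"
proof (rule rnd_eqI)
  show "\<forall>g. is_double g \<longrightarrow> \<bar>f - r\<bar> \<le> \<bar>g - r\<bar>"
  proof (intro allI impI)
    fix g assume "is_double g" thus "\<bar>f - r\<bar> \<le> \<bar>g - r\<bar>" using assms(2) by (cases "g = f") auto
  qed
qed (use assms in auto)

lemma parity:
  assumes "2^52 \<le> n" "n < 2^53" "odd n"
  shows "\<not> even_double (real_of_int n * 2 powr real_of_int j)"
proof
  assume "even_double (real_of_int n * 2 powr real_of_int j)"
  then obtain m e where me: "real_of_int n * 2 powr real_of_int j = real_of_int m * 2 powr real_of_int e"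
    "even m" "\<bar>m\<bar> < 2^53" unfolding even_double_def by blast
  show False
  proof (cases "j \<le> e")
    case True
    hence "real_of_int n * 2 powr real_of_int j = real_of_int (m * 2 ^ nat (e - j)) * 2 powr real_of_int j"
      using me(1) pow2_split'[OF True] by simp
    hence "n = m * 2 ^ nat (e - j)" by (rule cancel2)
    thus False using me(2) assms(3) by simp
  next
    case False
    hence "real_of_int m * 2 powr real_of_int e = real_of_int (n * 2 ^ nat (j - e)) * 2 powr real_of_int e"
      using me(1) pow2_split'[of e j] by simp
    hence m: "m = n * 2 ^ nat (j - e)" by (rule cancel2)
    have "(2::int) ^ 1 \<le> 2 ^ nat (j - e)" using False by (intro power_increasing) auto
    hence "n * 2 \<le> n * 2 ^ nat (j - e)" using assms(1) by (intro mult_left_mono) auto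
    hence "n * 2 \<le> m" using m by simp
    moreover have "(2::int)^53 = 2 * 2^52" by simp
    ultimately show False using me(3) assms(1) by linarith
  qed
qed

lemma two_cand_lo:
  assumes c: "\<forall>g. is_double g \<longrightarrow> g \<le> lo \<or> hi \<le> g" and d: "is_double lo" and "lo \<le> r" "r \<le> hi"
    and h: "r - lo < hi - r \<or> (r - lo = hi - r \<and> even_double lo \<and> \<not> even_double hi)"
  shows "rnd r = lo \<and> (\<forall>g. is_double g \<longrightarrow> \<bar>lo - r\<bar> \<le> \<bar>g - r\<bar>)"
proof -
  have mn: "\<forall>g. is_double g \<longrightarrow> \<bar>lo - r\<bar> \<le> \<bar>g - r\<bar>"
  proof (intro allI impI)
    fix g assume "is_double g"
    hence "g \<le> lo \<or> hi \<le> g" using c by blast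
    thus "\<bar>lo - r\<bar> \<le> \<bar>g - r\<bar>" using assms(3,4) h by linarith
  qed
  have tie: "g = hi \<and> r - lo = hi - r" if "is_double g" "g \<noteq> lo" "\<bar>g - r\<bar> = \<bar>lo - r\<bar>" for g
  proof -
    have "g \<le> lo \<or> hi \<le> g" using c that(1) by blast
    thus ?thesis using that(2,3) assms(3,4) h by linarith
  qed
  have "rnd r = lo"
  proof (rule rnd_eqI[OF d mn])
    show "(\<exists>g. is_double g \<and> g \<noteq> lo \<and> \<bar>g - r\<bar> = \<bar>lo - r\<bar>) \<longrightarrow> even_double lo"
      using tie h by force
    show "\<forall>g. is_double g \<and> g \<noteq> lo \<and> \<bar>g - r\<bar> = \<bar>lo - r\<bar> \<longrightarrow> \<not> even_double g"
      using tie h by force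
  qed
  thus ?thesis using mn by blast
qed

lemma two_cand_hi:
  assumes c: "\<forall>g. is_double g \<longrightarrow> g \<le> lo \<or> hi \<le> g" and d: "is_double hi" and "lo \<le> r" "r \<le> hi"
    and h: "hi - r < r - lo \<or> (r - lo = hi - r \<and> even_double hi \<and> \<not> even_double lo)"
  shows "rnd r = hi \<and> (\<forall>g. is_double g \<longrightarrow> \<bar>hi - r\<bar> \<le> \<bar>g - r\<bar>)"
proof -
  have mn: "\<forall>g. is_double g \<longrightarrow> \<bar>hi - r\<bar> \<le> \<bar>g - r\<bar>"
  proof (intro allI impI)
    fix g assume "is_double g"
    hence "g \<le> lo \<or> hi \<le> g" using c by blast
    thus "\<bar>hi - r\<bar> \<le> \<bar>g - r\<bar>" using assms(3,4) h by linarith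
  qed
  have tie: "g = lo \<and> r - lo = hi - r" if "is_double g" "g \<noteq> hi" "\<bar>g - r\<bar> = \<bar>hi - r\<bar>" for g
  proof -
    have "g \<le> lo \<or> hi \<le> g" using c that(1) by blast
    thus ?thesis using that(2,3) assms(3,4) h by linarith
  qed
  have "rnd r = hi"
  proof (rule rnd_eqI[OF d mn])
    show "(\<exists>g. is_double g \<and> g \<noteq> hi \<and> \<bar>g - r\<bar> = \<bar>hi - r\<bar>) \<longrightarrow> even_double hi"
      using tie h by force
    show "\<forall>g. is_double g \<and> g \<noteq> hi \<and> \<bar>g - r\<bar> = \<bar>hi - r\<bar> \<longrightarrow> \<not> even_double g"
      using tie h by force
  qed
  thus ?thesis using mn by blast
qed

lemma even_double_of:
  assumes "\<bar>n\<bar> < 2^53" "even n" "-1074 \<le> j" "j \<le> 971"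
  shows "even_double (real_of_int n * 2 powr real_of_int j)"
  using assms unfolding even_double_def by blast

lemma rnd_spec:
  assumes r0: "2 powr (-1022) \<le> r"
  shows "is_double (rnd r) \<and> (\<forall>g. is_double g \<longrightarrow> \<bar>rnd r - r\<bar> \<le> \<bar>g - r\<bar>)"
proof -
  define D :: real where "D = real_of_int (2^53-1) * 2 powr real_of_int 971"
  have Dd: "is_double D" unfolding D_def by (rule double_of) auto
  have Db: "\<bar>g\<bar> \<le> D" if "is_double g" for g
    using double_bound[OF that] unfolding D_def by simp
  show ?thesis
  proof (cases "D \<le> r")
    case True
    have "rnd r = D"
    proof (rule rnd_unique[OF Dd], intro allI impI)
      fix g assume "is_double g \<and> g \<noteq> D"
      hence "g < D" using Db[of g] by auto
      thus "\<bar>D - r\<bar> < \<bar>g - r\<bar>" using True by linarith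
    qed
    moreover have "\<forall>g. is_double g \<longrightarrow> \<bar>D - r\<bar> \<le> \<bar>g - r\<bar>"
    proof (intro allI impI)
      fix g assume "is_double g"
      hence "\<bar>g\<bar> \<le> D" by (rule Db)
      thus "\<bar>D - r\<bar> \<le> \<bar>g - r\<bar>" using True by linarith
    qed
    ultimately show ?thesis using Dd by simp
  next
    case False
    hence rD: "r < D" by simp
    have rpos: "r > 0" using r0 by (smt (verit) powr_gt_zero)
    define k where "k = \<lfloor>log 2 r\<rfloor>"
    define v :: real where "v = 2 powr real_of_int (k-52)"
    have vpos: "v > 0" unfolding v_def by simp
    have pk: "2 powr real_of_int k = 2^52 * v" using pow2_split[of 52 "k-52"] unfolding v_def by simp
    have pk1: "2 powr real_of_int (k+1) = 2^53 * v" using pow2_split[of 53 "k-52"] unfolding v_def by (simp add: add.commute mult.commute)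
    have rl: "2 powr (log 2 r) = r" using rpos by simp
    have lo_r: "2 powr real_of_int k \<le> r"
      using rl unfolding k_def by (metis of_int_floor_le powr_mono one_le_numeral)
    have r_hi: "r < 2 powr real_of_int (k+1)"
    proof -
      have "log 2 r < real_of_int (k+1)" unfolding k_def by linarith
      hence "2 powr (log 2 r) < 2 powr real_of_int (k+1)" by (intro powr_less_mono) auto
      thus ?thesis using rl by simp
    qed
    have "2 powr (-1022) < 2 powr real_of_int (k+1)" using r0 r_hi by linarith
    hence kge: "-1022 \<le> k" by (simp add: powr_less_cancel_iff)
    have "D < 2 powr real_of_int 1024"
    proof -
      have "2 powr real_of_int 1024 = 2 powr real_of_int 971 * 2^53"
        using pow2_split[of 53 971] by simp
      thus ?thesis unfolding D_def by simp
    qed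
    hence "2 powr real_of_int k < 2 powr real_of_int 1024" using lo_r rD by linarith
    hence kle: "k \<le> 1023" by (subst (asm) powr_less_cancel_iff) auto
    define n where "n = \<lfloor>r / v\<rfloor>"
    have nlo: "real_of_int n * v \<le> r" unfolding n_def using vpos
      by (metis of_int_floor_le pos_le_divide_eq)
    have nhi: "r < real_of_int (n+1) * v" unfolding n_def using vpos
      by (metis floor_correct pos_divide_less_eq)
    have n52: "2^52 \<le> n"
    proof -
      have "2^52 \<le> r / v" using lo_r pk vpos by (simp add: pos_le_divide_eq)
      thus ?thesis unfolding n_def by (metis le_floor_iff of_int_numeral of_int_power)
    qed
    have n53: "n < 2^53"
    proof -
      have "r / v < 2^53" using r_hi pk1 vpos by (simp add: pos_divide_less_eq)
      thus ?thesis unfolding n_def by (metis floor_less_iff of_int_numeral of_int_power)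
    qed
    have n53': "n + 1 < 2^53" if "k = 1023"
    proof -
      have "D = real_of_int (2^53-1) * v" unfolding D_def v_def using that by simp
      hence "real_of_int n * v < real_of_int (2^53-1) * v" using nlo rD by linarith
      hence "n < 2^53 - 1" using vpos by simp
      thus ?thesis by simp
    qed
    define lo where "lo = real_of_int n * v"
    define hi where "hi = real_of_int (n+1) * v"
    have dlo: "is_double lo" unfolding lo_def v_def
      by (rule double_of) (use n52 n53 kge kle in auto)
    have dhi: "is_double hi"
    proof (cases "n + 1 < 2^53")
      case True thus ?thesis unfolding hi_def v_def
        by (intro double_of) (use n52 kge kle in auto)
    next
      case False
      hence "k \<noteq> 1023" using n53' by blast
      thus ?thesis unfolding hi_def v_def
        by (intro double_of') (use n52 n53 kge kle in auto)
    qed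
    have c: "\<forall>g. is_double g \<longrightarrow> g \<le> lo \<or> hi \<le> g"
    proof (intro allI impI, rule ccontr)
      fix g assume g: "is_double g" "\<not> (g \<le> lo \<or> hi \<le> g)"
      have "2 powr real_of_int k \<le> lo" unfolding lo_def pk using n52 vpos
      proof -
        have "2^52 \<le> real_of_int n" using n52 by (metis of_int_le_iff of_int_numeral of_int_power)
        thus "2 ^ 52 * v \<le> real_of_int n * v" using vpos by (intro mult_right_mono) auto
      qed
      hence "2 powr real_of_int k \<le> \<bar>g\<bar>" using g by linarith
      then obtain b where b: "g = real_of_int b * v" using grid[OF g(1)] unfolding v_def by blast
      have "real_of_int n < real_of_int b" "real_of_int b < real_of_int (n+1)"
        using g b vpos unfolding lo_def hi_def by (simp_all add: mult_less_cancel_right)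
      hence "n < b" "b < n + 1" by linarith+
      thus False by linarith
    qed
    have lor: "lo \<le> r" "r \<le> hi" using nlo nhi unfolding lo_def hi_def by auto
    obtain f where f: "rnd r = f" "is_double f" "\<forall>g. is_double g \<longrightarrow> \<bar>f - r\<bar> \<le> \<bar>g - r\<bar>"
    proof (cases "r - lo = hi - r")
      case False
      show ?thesis
      proof (cases "r - lo < hi - r")
        case True thus ?thesis using two_cand_lo[OF c dlo lor] dlo that by blast
      next
        case False2: False
        hence "hi - r < r - lo" using False by linarith
        thus ?thesis using two_cand_hi[OF c dhi lor] dhi that by blast
      qed
    next
      case eq: True
      show ?thesis
      proof (cases "even n")
        case True
        have "odd (n+1)" using True by simp
        moreover have "n + 1 \<noteq> 2^53" using True by auto
        ultimately have "\<not> even_double hi" unfolding hi_def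
          using parity[of "n+1" "k-52"] n52 n53 unfolding v_def by simp
        moreover have "even_double lo" unfolding lo_def v_def
          by (rule even_double_of) (use True n52 n53 kge kle in auto)
        ultimately show ?thesis using two_cand_lo[OF c dlo lor] eq dlo that by blast
      next
        case False
        have "\<not> even_double lo" unfolding lo_def
          using parity[of "n" "k-52"] n52 n53 False unfolding v_def by simp
        moreover have "even_double hi"
        proof (cases "n + 1 < 2^53")
          case True thus ?thesis unfolding hi_def v_def
            by (intro even_double_of) (use False n52 kge kle in auto)
        next
          case F2: False
          hence n1: "n + 1 = 2^53" using n53 by simp
          hence "k \<noteq> 1023" using n53' by auto
          have "hi = real_of_int (2^52) * 2 powr real_of_int (k - 51)"
            unfolding hi_def v_def n1 using pow2_split[of 1 "k-52"] by simp
          thus ?thesis using \<open>k \<noteq> 1023\<close> kge kle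
            by (simp only:) (rule even_double_of; simp)
        qed
        ultimately show ?thesis using two_cand_hi[OF c dhi lor] eq dhi that by blast
      qed
    qed
    thus ?thesis by simp
  qed
qed

theorem mainTheorem3:
  fixes E :: int and x M :: real
  assumes normal_range: "-1022 \<le> E" "E + 2 \<le> 1023"
    and dx: "is_double x" and dM: "is_double M"
    and xpos: "x > 0"
    and xrange: "2 powr real_of_int E \<le> x" "x < 2 powr real_of_int (E + 1)"
    and M2: "M \<ge> 2"
    and yrange: "2 powr real_of_int (E + 1) \<le> fmul x M" "fmul x M < 2 powr real_of_int (E + 2)"
  shows "fdiv (fmul x M) M = x"
proof -
  define u :: real where "u = 2 powr real_of_int (E - 52)"
  define w :: real where "w = 2 powr real_of_int (E - 51)"
  have upos: "u > 0" unfolding u_def by simp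
  have wu: "w = 2 * u" unfolding w_def u_def using pow2_split[of 1 "E-52"] by simp
  have pE: "2 powr real_of_int E = 2^52 * u" using pow2_split[of 52 "E-52"] unfolding u_def by simp
  have pE1: "2 powr real_of_int (E+1) = 2^52 * w" using pow2_split[of 52 "E-51"] unfolding w_def by (simp add: add.commute mult.commute)
  have pE2: "2 powr real_of_int (E+2) = 2^53 * w" using pow2_split[of 53 "E-51"] unfolding w_def by (simp add: add.commute mult.commute)
  obtain a where a: "x = real_of_int a * u" using grid[OF dx] xrange(1) xpos unfolding u_def by auto
  have a52: "2^52 \<le> a"
  proof -
    have "2^52 * u \<le> real_of_int a * u" using xrange(1) pE a by simp
    hence "2^52 \<le> real_of_int a" using upos by simp
    thus ?thesis by (metis of_int_le_iff of_int_numeral of_int_power)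
  qed
  have a53: "a < 2^53"
  proof -
    have "real_of_int a * u < 2^53 * u" using xrange(2) pE1 wu a by simp
    hence "real_of_int a < 2^53" using upos by simp
    thus ?thesis by (metis of_int_less_iff of_int_numeral of_int_power)
  qed
  define r where "r = x * M"
  define y where "y = fmul x M"
  have yr: "y = rnd r" unfolding y_def r_def fmul_def by simp
  have r1: "2 powr real_of_int (E+1) \<le> r"
  proof -
    have "2 powr real_of_int (E+1) = 2 powr real_of_int E * 2" using pow2_split[of 1 E] by simp
    also have "\<dots> \<le> x * M" using xrange(1) M2 xpos by (intro mult_mono) auto
    finally show ?thesis unfolding r_def .
  qed
  have "2 powr (-1022) \<le> 2 powr real_of_int (E+1)" using normal_range by simp
  hence r0: "2 powr (-1022) \<le> r" using r1 by linarith
  have dy: "is_double y" and ny: "\<And>g. is_double g \<Longrightarrow> \<bar>y - r\<bar> \<le> \<bar>g - r\<bar>"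
    using rnd_spec[OF r0] yr by auto
  have yl: "2^52 * w \<le> y" "y < 2^53 * w" using yrange pE1 pE2 unfolding y_def by auto
  have r2: "r \<le> 2^53 * w"
  proof (rule ccontr)
    assume "\<not> r \<le> 2^53 * w"
    hence rT: "2^53 * w < r" by simp
    have "is_double (real_of_int (2^52) * 2 powr real_of_int (E - 50))"
      by (rule double_of) (use normal_range in auto)
    moreover have "real_of_int (2^52) * 2 powr real_of_int (E - 50) = 2^53 * w"
      unfolding w_def using pow2_split[of 1 "E-51"] by simp
    ultimately have "is_double (2^53 * w)" by simp
    from ny[OF this] show False using rT yl by linarith
  qed
  have rw: "2^52 * w \<le> r" using r1 pE1 by simp
  have wpos: "w > 0" using wu upos by simp
  have err: "\<bar>y - r\<bar> \<le> u"
  proof -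
    define n where "n = \<lfloor>r / w\<rfloor>"
    have nlo: "real_of_int n * w \<le> r" unfolding n_def using wpos
      by (metis of_int_floor_le pos_le_divide_eq)
    have nhi: "r < real_of_int (n+1) * w" unfolding n_def using wpos
      by (metis floor_correct pos_divide_less_eq)
    have n52: "2^52 \<le> n"
    proof -
      have "2^52 \<le> r / w" using rw wpos by (simp add: pos_le_divide_eq)
      thus ?thesis unfolding n_def by (metis le_floor_iff of_int_numeral of_int_power)
    qed
    have n53: "n \<le> 2^53"
    proof -
      have "r / w \<le> 2^53" using r2 wpos by (simp add: pos_divide_le_eq)
      thus ?thesis unfolding n_def by (metis floor_mono floor_numeral floor_power of_int_numeral) 
    qed
    have dlo: "is_double (real_of_int n * w)" unfolding w_def
      by (rule double_of') (use n52 n53 normal_range in auto)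
    show ?thesis
    proof (cases "n = 2^53")
      case True
      hence "r = real_of_int n * w" using nlo r2 by simp
      thus ?thesis using ny[OF dlo] upos by simp
    next
      case False
      have dhi: "is_double (real_of_int (n+1) * w)" unfolding w_def
        by (rule double_of') (use n52 n53 False normal_range in auto)
      have "real_of_int (n+1) * w = real_of_int n * w + w" by (simp add: distrib_right)
      thus ?thesis using ny[OF dlo] ny[OF dhi] nlo nhi wu by linarith
    qed
  qed
  have fd: "fdiv (fmul x M) M = rnd (y / M)" unfolding fdiv_def y_def by simp
  have Mpos: "M > 0" using M2 by simp
  show ?thesis
  proof (cases "M = 2 \<or> a = 2^52")
    case True
    have dr: "is_double r"
    proof (cases "M = 2")
      case True
      have "r = real_of_int a * w" unfolding r_def a True wu by simp
      moreover have "is_double (real_of_int a * w)" unfolding w_def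
        by (rule double_of) (use a52 a53 normal_range in auto)
      ultimately show ?thesis by simp
    next
      case False
      hence aa: "a = 2^52" using \<open>M = 2 \<or> a = 2^52\<close> by simp
      obtain c where c: "M = real_of_int c * 2 powr real_of_int (1 - 52)"
        using grid[OF dM, of 1] M2 by auto
      have "x = 2 powr real_of_int E" using a aa pE by simp
      hence "r = real_of_int c * (2 powr real_of_int (1-52) * 2 powr real_of_int E)"
        unfolding r_def c by simp
      also have "2 powr real_of_int (1-52) * 2 powr real_of_int E = w"
        unfolding w_def by (simp add: powr_add[symmetric])
      finally have rc: "r = real_of_int c * w" .
      have "real_of_int c * w \<le> 2^53 * w" using r2 rc by simp
      hence "real_of_int c \<le> 2^53" using wpos by simp
      hence c1: "c \<le> 2^53" by (metis of_int_le_iff of_int_numeral of_int_power)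
      have "0 < x * M" using xpos Mpos by simp
      hence "0 < real_of_int c * w" using rc r_def by simp
      hence "0 < c" using wpos by (simp add: zero_less_mult_iff)
      thus ?thesis unfolding rc w_def using c1 normal_range by (intro double_of') auto
    qed
    have "y = r" using ny[OF dr] by simp
    hence "y / M = x" unfolding r_def using Mpos by simp
    moreover have "rnd x = x" by (rule rnd_unique[OF dx]) auto
    ultimately show ?thesis using fd by simp
  next
    case False
    hence M3: "M > 2" and a1: "2^52 < a" using M2 a52 by auto
    have zx: "\<bar>y / M - x\<bar> < u / 2"
    proof -
      have "y / M - x = (y - r) / M" unfolding r_def using Mpos by (simp add: field_simps)
      hence "\<bar>y / M - x\<bar> = \<bar>y - r\<bar> / M" using Mpos by simp
      also have "\<dots> \<le> u / M" using err Mpos by (simp add: divide_right_mono)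
      also have "\<dots> < u / 2" by (rule divide_strict_left_mono) (use M3 upos in auto)
      finally show ?thesis .
    qed
    have gap: "u \<le> \<bar>g - x\<bar>" if g: "is_double g" "g \<noteq> x" for g
    proof (cases "2 powr real_of_int E \<le> g")
      case True
      have "0 < (2::real) powr real_of_int E" by simp
      hence "2 powr real_of_int E \<le> \<bar>g\<bar>" using True by linarith
      then obtain b where b: "g = real_of_int b * u" using grid[OF g(1), of E] unfolding u_def by auto
      have "b \<noteq> a" using g(2) a b by auto
      hence "1 \<le> \<bar>b - a\<bar>" by linarith
      hence "1 \<le> real_of_int \<bar>b - a\<bar>" by (metis of_int_1 of_int_le_iff)
      hence "1 * u \<le> real_of_int \<bar>b - a\<bar> * u" using upos
        by (intro mult_right_mono) auto
      thus ?thesis using a b upos by (simp add: abs_mult left_diff_distrib[symmetric])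
    next
      case False
      have "2^52 + 1 \<le> a" using a1 by simp
      hence "real_of_int (2^52 + 1) \<le> real_of_int a" by (simp only: of_int_le_iff)
      hence "(2^52 + 1) * u \<le> real_of_int a * u" using upos by (intro mult_right_mono) auto
      thus ?thesis using False pE a by (simp add: distrib_right)
    qed
    have "rnd (y / M) = x"
    proof (rule rnd_unique[OF dx], intro allI impI)
      fix g assume "is_double g \<and> g \<noteq> x"
      hence "u \<le> \<bar>g - x\<bar>" using gap by blast
      thus "\<bar>x - y / M\<bar> < \<bar>g - y / M\<bar>" using zx by linarith
    qed
    thus ?thesis using fd by simp
  qed
qed
end
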